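(* Fix $\gamma\in(0,1]$. For any $\epsilon\in(0,\gamma]$, any $n>0$ and any $\mathbf{z}_n\in\mathcal{Z}^n$, $$ \ln \mathcal{N}\left(\epsilon, \mathcal{F}_{\mathcal{G},\gamma}, d_{2,\mathbf{z}_n}\right) \leqslant 640\, C\, d_{\mathcal{G}_{0}}\!\left(\frac{\epsilon}{384}\right) \ln^2\!\left(\frac{256\, C M^2}{\epsilon^2}\, d_{\mathcal{G}_{0}}\!\left(\frac{\epsilon}{384}\right) \right)\ln\!\left(\frac{7\gamma}{\epsilon}\right). $$
   Context: Let $C>2$, $\mathcal{Y}=\{1,\dots,C\}$, $\mathcal{X}=[0,A]^d$ (with $A\ge1$), $\mathcal{Z}=\mathcal{X}\times\mathcal{Y}$. Let $\mathcal{G}_0$ be a class of functions $\mathcal{X}\to[0,M]$, $M\ge1$ (in the paper, $\mathcal{G}_0\subseteq BV([0,A]^d,[0,M])$ of total variation at most $V$), and $\mathcal{G}=\mathcal{G}_0^C$. For $g\in\mathcal{G}$ and $(x,y)\in\mathcal{Z}$ put $f_{g,\gamma}(x,y)=\max\left(0,\min\left(\gamma,\tfrac12\big(g_y(x)-\max_{k\ne y}g_k(x)\big)\right)\right)$ and $\mathcal{F}_{\mathcal{G},\gamma}=\{f_{g,\gamma}:g\in\mathcal{G}\}$. For $\mathbf{z}_n=(z_i)$, $d_{2,\mathbf{z}_n}(f,f')=\left(\frac1n\sum_{i=1}^n|f(z_i)-f'(z_i)|^2\right)^{1/2}$. The covering number $\mathcal{N}(\epsilon,\mathcal{F},\rho)$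 is the smallest cardinality of a subset $\bar{\mathcal{F}}\subseteq\mathcal{F}$ such that every $f\in\mathcal{F}$ has some $\bar f\in\bar{\mathcal{F}}$ with $\rho(f,\bar f)<\epsilon$. The fat-shattering dimension $d_{\mathcal{G}_0}(\epsilon)$ is the maximal cardinality of a set $\{x_1,\dots,x_n\}$ for which there is a witness $s$ such that for every $(b_i)\in\{-1,1\}^n$ some $f\in\mathcal{G}_0$ satisfies $b_i(f(x_i)-s(x_i))\ge\epsilon$ for all $i$; it is assumed that $d_{\mathcal{G}_0}(\epsilon/384)\ge1$. *)

theory Defs
  imports "HOL-Analysis.Analysis" "HOL-Library.Extended_Nat"
begin

text \<open>Input domain X = [0,A]^d, modelled with a finite index type 'd.\<close>
definition cube :: "real \<Rightarrow> (real^'d) set" where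
  "cube A = {x. \<forall>i. 0 \<le> x $ i \<and> x $ i \<le> A}"

definition Zset :: "real \<Rightarrow> nat \<Rightarrow> ((real^'d) \<times> nat) set" where
  "Zset A C = cube A \<times> {1..C}"

definition prod_class :: "nat \<Rightarrow> ('x \<Rightarrow> real) set \<Rightarrow> (nat \<Rightarrow> 'x \<Rightarrow> real) set" where
  "prod_class C G0 = {g. \<forall>k\<in>{1..C}. g k \<in> G0}"

definition margin_fun :: "nat \<Rightarrow> real \<Rightarrow> (nat \<Rightarrow> 'x \<Rightarrow> real) \<Rightarrow> 'x \<times> nat \<Rightarrow> real" where
  "margin_fun C \<gamma> g z = (case z of (x, y) \<Rightarrow>
     max 0 (min \<gamma> ((g y x - Max {g k x | k. k \<in> {1..C} \<and> k \<noteq> y}) / 2)))"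

definition margin_class :: "nat \<Rightarrow> real \<Rightarrow> (nat \<Rightarrow> 'x \<Rightarrow> real) set \<Rightarrow> ('x \<times> nat \<Rightarrow> real) set" where
  "margin_class C \<gamma> G = margin_fun C \<gamma> ` G"

definition d2 :: "nat \<Rightarrow> (nat \<Rightarrow> 'z) \<Rightarrow> ('z \<Rightarrow> real) \<Rightarrow> ('z \<Rightarrow> real) \<Rightarrow> real" where
  "d2 n z f f' = sqrt ((1 / real n) * (\<Sum>i<n. \<bar>f (z i) - f' (z i)\<bar>^2))"

text \<open>Covering number: least cardinality of an internal eps-cover (\<infinity> if none is finite).\<close>
definition covering_number :: "real \<Rightarrow> ('a set) \<Rightarrow> ('a \<Rightarrow> 'a \<Rightarrow> real) \<Rightarrow> enat" where
  "covering_number eps F \<rho> =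
     Inf {enat (card S) | S. finite S \<and> S \<subseteq> F \<and> (\<forall>f\<in>F. \<exists>g\<in>S. \<rho> f g < eps)}"

definition fat_shatters :: "('x \<Rightarrow> real) set \<Rightarrow> 'x set \<Rightarrow> real \<Rightarrow> 'x set \<Rightarrow> bool" where
  "fat_shatters G0 X eps S \<longleftrightarrow> finite S \<and> S \<subseteq> X \<and>
     (\<exists>s. \<forall>B \<subseteq> S. \<exists>f\<in>G0. \<forall>x\<in>S.
        (x \<in> B \<longrightarrow> f x - s x \<ge> eps) \<and> (x \<notin> B \<longrightarrow> s x - f x \<ge> eps))"

definition fat_dim :: "('x \<Rightarrow> real) set \<Rightarrow> 'x set \<Rightarrow> real \<Rightarrow> enat" where
  "fat_dim G0 X eps = Sup {enat (card S) | S. fat_shatters G0 X eps S}"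

end

theory Submission
  imports Defs
begin

definition sep2 :: "'a set \<Rightarrow> ('a \<Rightarrow> nat) set \<Rightarrow> bool" where
 "sep2 \<Omega> H \<longleftrightarrow> (\<forall>h\<in>H. \<forall>h'\<in>H. h \<noteq> h' \<longrightarrow> (\<exists>x\<in>\<Omega>. h' x + 2 \<le> h x \<or> h x + 2 \<le> h' x))"

definition sshat :: "('a \<Rightarrow> nat) set \<Rightarrow> 'a set \<Rightarrow> ('a \<Rightarrow> nat) \<Rightarrow> bool" where
 "sshat H S r \<longleftrightarrow> (\<forall>B\<subseteq>S. \<exists>h\<in>H. \<forall>y\<in>S. (y\<in>B \<longrightarrow> r y + 1 \<le> h y) \<and> (y\<notin>B \<longrightarrow> h y + 1 \<le> r y))"

definition Sh :: "'a set \<Rightarrow> ('a \<Rightarrow> nat) set \<Rightarrow> ('a set \<times> ('a \<Rightarrow> nat)) set" where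
 "Sh \<Omega> H = {(S,r). S \<subseteq> \<Omega> \<and> (\<forall>y. y \<notin> S \<longrightarrow> r y = 0) \<and> sshat H S r}"

lemma Sh_finite:
  assumes "finite \<Omega>" "\<forall>h\<in>H. \<forall>y\<in>\<Omega>. h y \<le> b"
  shows "finite (Sh \<Omega> H)"
proof -
  have "Sh \<Omega> H \<subseteq> Pow \<Omega> \<times> {r. \<forall>x. (x \<in> \<Omega> \<longrightarrow> r x \<in> {..b}) \<and> (x \<notin> \<Omega> \<longrightarrow> r x = 0)}"
  proof (rule subsetI)
    fix p assume "p \<in> Sh \<Omega> H"
    then obtain S r where p: "p = (S, r)" and S: "S \<subseteq> \<Omega>" "\<forall>y. y \<notin> S \<longrightarrow> r y = 0" "sshat H S r"
      unfolding Sh_def by auto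
    have "r x \<le> b" if "x \<in> \<Omega>" for x
    proof (cases "x \<in> S")
      case True
      from S(3) obtain h where "h \<in> H" "\<forall>y\<in>S. (y\<in>S \<longrightarrow> r y + 1 \<le> h y)"
        unfolding sshat_def by blast
      with True assms(2) S(1) that show ?thesis by fastforce
    qed (use S in auto)
    then show "p \<in> Pow \<Omega> \<times> {r. \<forall>x. (x \<in> \<Omega> \<longrightarrow> r x \<in> {..b}) \<and> (x \<notin> \<Omega> \<longrightarrow> r x = 0)}"
      using S p by auto
  qed
  moreover have "finite (Pow \<Omega> \<times> {r. \<forall>x. (x \<in> \<Omega> \<longrightarrow> r x \<in> {..b}) \<and> (x \<notin> \<Omega> \<longrightarrow> r x = 0)})"
    using assms(1) by (intro finite_cartesian_product finite_set_of_finite_funs) auto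
  ultimately show ?thesis by (rule finite_subset)
qed

lemma sshat_mono: "sshat H S r \<Longrightarrow> H \<subseteq> H' \<Longrightarrow> sshat H' S r"
  unfolding sshat_def by blast

lemma alon_count:
  fixes N b :: nat
  assumes "N \<ge> 1"
  shows "finite \<Omega> \<Longrightarrow> card \<Omega> \<le> N \<Longrightarrow> (\<forall>h\<in>H. \<forall>y\<in>\<Omega>. h y \<le> b) \<Longrightarrow> sep2 \<Omega> H \<Longrightarrow> finite H
     \<Longrightarrow> (N*(b+1)+1)^r \<le> card H \<Longrightarrow> 2^r \<le> card (Sh \<Omega> H)"
proof (induction r arbitrary: \<Omega> H)
  case 0
  then obtain h where "h \<in> H" by fastforce
  then have "({}, \<lambda>_. 0) \<in> Sh \<Omega> H" unfolding Sh_def sshat_def by auto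
  moreover have "finite (Sh \<Omega> H)" using Sh_finite 0 by blast
  ultimately show ?case by (simp add: Suc_le_eq card_gt_0_iff) blast
next
  case (Suc r)
  define K where "K = (N*(b+1)+1)^r"
  have K1: "K \<ge> 1" unfolding K_def by simp
  have cH: "(N*(b+1)+1) * K \<le> card H" using Suc.prems unfolding K_def by simp
  define HV where "HV x v = {h\<in>H. h x = v}" for x v
  have ex: "\<exists>x\<in>\<Omega>. \<exists>i j. j + 2 \<le> i \<and> K \<le> card (HV x i) \<and> K \<le> card (HV x j)"
  proof (rule ccontr)
    assume nex: "\<not> ?thesis"
    define Hb where "Hb = (\<Union>x\<in>\<Omega>. \<Union>v\<in>{v. v \<le> b \<and> card (HV x v) < K}. HV x v)"
    have "card Hb \<le> (\<Sum>x\<in>\<Omega>. card (\<Union>v\<in>{v. v \<le> b \<and> card (HV x v) < K}. HV x v))"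
      unfolding Hb_def using Suc.prems(1) by (rule card_UN_le)
    also have "\<dots> \<le> (\<Sum>x\<in>\<Omega>. (\<Sum>v\<in>{v. v \<le> b \<and> card (HV x v) < K}. card (HV x v)))"
      by (intro sum_mono card_UN_le) auto
    also have "\<dots> \<le> (\<Sum>x\<in>\<Omega>. (\<Sum>v\<in>{..b}. K - 1))"
    proof (intro sum_mono)
      fix x assume "x \<in> \<Omega>"
      have "(\<Sum>v\<in>{v. v \<le> b \<and> card (HV x v) < K}. card (HV x v)) \<le> (\<Sum>v\<in>{v. v \<le> b \<and> card (HV x v) < K}. K - 1)"
        by (intro sum_mono) auto
      also have "\<dots> \<le> (\<Sum>v\<in>{..b}. K - 1)" by (intro sum_mono2) auto
      finally show "(\<Sum>v\<in>{v. v \<le> b \<and> card (HV x v) < K}. card (HV x v)) \<le> (\<Sum>v\<in>{..b}. K - 1)" .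
    qed
    also have "\<dots> = card \<Omega> * ((b+1) * (K - 1))" by simp
    also have "\<dots> \<le> N * ((b+1) * (K - 1))" using Suc.prems(2) by simp
    finally have cHb: "card Hb \<le> N * ((b+1) * (K - 1))" .
    have cHg: "card (H - Hb) \<le> 1"
    proof -
      have fHg: "finite (H - Hb)" using Suc.prems(5) by simp
      have "\<forall>h\<in>H - Hb. \<forall>h'\<in>H - Hb. h = h'"
      proof (intro ballI, rule ccontr)
        fix h h' assume hh: "h \<in> H - Hb" "h' \<in> H - Hb" "h \<noteq> h'"
        have big: "K \<le> card (HV x (g x))" if "g \<in> H - Hb" "x \<in> \<Omega>" for g x
        proof (rule ccontr)
          assume "\<not> K \<le> card (HV x (g x))"
          moreover have "g x \<le> b" using that Suc.prems(3) by auto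
          moreover have "g \<in> HV x (g x)" using that unfolding HV_def by auto
          ultimately have "g \<in> (\<Union>v\<in>{v. v \<le> b \<and> card (HV x v) < K}. HV x v)" by auto
          then have "g \<in> Hb" unfolding Hb_def using that(2) by blast
          then show False using that by auto
        qed
        from Suc.prems(4) hh obtain x where x: "x \<in> \<Omega>" "h' x + 2 \<le> h x \<or> h x + 2 \<le> h' x"
          unfolding sep2_def by blast
        have b1: "K \<le> card (HV x (h x))" "K \<le> card (HV x (h' x))"
          using big[OF hh(1) x(1)] big[OF hh(2) x(1)] by auto
        from x(2) have "\<exists>x\<in>\<Omega>. \<exists>i j. j + 2 \<le> i \<and> K \<le> card (HV x i) \<and> K \<le> card (HV x j)"
        proof
          assume "h' x + 2 \<le> h x" then show ?thesis using b1 x(1) by blast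
        next
          assume "h x + 2 \<le> h' x" then show ?thesis using b1 x(1) by blast
        qed
        then show False using nex by blast
      qed
      then show ?thesis using card_le_Suc0_iff_eq[OF fHg] by simp
    qed
    have cHb_fin: "finite Hb" unfolding Hb_def using Suc.prems(1,5) unfolding HV_def by auto
    have "card H \<le> card (H - Hb) + card Hb"
      proof -
      have "card H \<le> card ((H - Hb) \<union> Hb)" using Suc.prems(5) cHb_fin by (intro card_mono) auto
      also have "\<dots> \<le> card (H - Hb) + card Hb" by (rule card_Un_le)
      finally show ?thesis .
    qed
    also have "\<dots> \<le> 1 + N * ((b+1) * (K - 1))" using cHb cHg by linarith
    also have "\<dots> < (N*(b+1)+1) * K"
    proof -
      obtain K' where K': "K = Suc K'" using K1 by (cases K) auto
      obtain a where a: "N * (b+1) = Suc a" using assms by (cases "N * (b+1)") auto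
      have "1 + N * ((b+1) * (K - 1)) = 1 + Suc a * K'" unfolding K' diff_Suc_1 mult.assoc[symmetric] a ..
      also have "\<dots> < Suc a * Suc K' + Suc K'" by simp
      also have "\<dots> = (N*(b+1)+1) * K" using a K' by (simp add: algebra_simps)
      finally show ?thesis .
    qed
    finally show False using cH by linarith
  qed
  then obtain x i j where x: "x \<in> \<Omega>" "j + 2 \<le> i" "K \<le> card (HV x i)" "K \<le> card (HV x j)" by blast
  define \<Omega>' where "\<Omega>' = \<Omega> - {x}"
  have fin': "finite \<Omega>'" "card \<Omega>' \<le> N" using Suc.prems(1,2) unfolding \<Omega>'_def
    by (auto intro: order_trans[OF card_Diff1_le])
  have sepv: "sep2 \<Omega>' (HV x v)" for v
    unfolding sep2_def
  proof (intro ballI impI)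
    fix h h' assume "h \<in> HV x v" "h' \<in> HV x v" "h \<noteq> h'"
    then obtain y where "y \<in> \<Omega>" "h' y + 2 \<le> h y \<or> h y + 2 \<le> h' y" "h x = v" "h' x = v"
      using Suc.prems(4) unfolding sep2_def HV_def by blast
    then show "\<exists>y\<in>\<Omega>'. h' y + 2 \<le> h y \<or> h y + 2 \<le> h' y" unfolding \<Omega>'_def by force
  qed
  have IHv: "2^r \<le> card (Sh \<Omega>' (HV x v))" if "K \<le> card (HV x v)" for v
  proof (rule Suc.IH[OF fin'])
    show "\<forall>h\<in>HV x v. \<forall>y\<in>\<Omega>'. h y \<le> b" using Suc.prems(3) unfolding HV_def \<Omega>'_def by auto
    show "sep2 \<Omega>' (HV x v)" by (rule sepv)
    show "finite (HV x v)" using Suc.prems(5) unfolding HV_def by auto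
    show "(N * (b + 1) + 1) ^ r \<le> card (HV x v)" using that unfolding K_def .
  qed
  define A1 where "A1 = Sh \<Omega>' (HV x i)"
  define A2 where "A2 = Sh \<Omega>' (HV x j)"
  define \<phi> where "\<phi> = (\<lambda>(S::'a set, r::'a\<Rightarrow>nat). (insert x S, r(x := j+1)))"
  have bH: "\<forall>h\<in>HV x v. \<forall>y\<in>\<Omega>'. h y \<le> b" for v using Suc.prems(3) unfolding HV_def \<Omega>'_def by auto
  have finA: "finite A1" "finite A2" unfolding A1_def A2_def using Sh_finite[OF fin'(1) bH] by auto
  have sub1: "A1 \<union> A2 \<subseteq> Sh \<Omega> H"
  proof (rule subsetI)
    fix p assume "p \<in> A1 \<union> A2"
    then obtain S r v where p: "p = (S,r)" "S \<subseteq> \<Omega>'" "\<forall>y. y \<notin> S \<longrightarrow> r y = 0" "sshat (HV x v) S r"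
      unfolding A1_def A2_def Sh_def by blast
    have "sshat H S r" using sshat_mono[OF p(4)] unfolding HV_def by blast
    then show "p \<in> Sh \<Omega> H" using p unfolding Sh_def \<Omega>'_def by auto
  qed
  have sub2: "\<phi> ` (A1 \<inter> A2) \<subseteq> Sh \<Omega> H"
  proof (clarsimp simp: \<phi>_def)
    fix S r assume S1: "(S, r) \<in> A1" and S2: "(S, r) \<in> A2"
    have S: "S \<subseteq> \<Omega>'" "\<forall>y. y \<notin> S \<longrightarrow> r y = 0" "sshat (HV x i) S r" "sshat (HV x j) S r"
      using S1 S2 unfolding A1_def A2_def Sh_def by auto
    have xS: "x \<notin> S" using S(1) unfolding \<Omega>'_def by auto
    show "(insert x S, r(x := Suc j)) \<in> Sh \<Omega> H"
      unfolding Sh_def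
    proof (clarsimp, intro conjI)
      show "x \<in> \<Omega>" by (rule x(1))
      show "S \<subseteq> \<Omega>" using S(1) unfolding \<Omega>'_def by auto
      show "\<forall>y. y \<noteq> x \<and> y \<notin> S \<longrightarrow> r y = 0" using S(2) by auto
      show "sshat H (insert x S) (r(x := Suc j))"
        unfolding sshat_def
      proof (intro allI impI)
        fix B assume B: "B \<subseteq> insert x S"
        show "\<exists>h\<in>H. \<forall>y\<in>insert x S. (y \<in> B \<longrightarrow> (r(x := Suc j)) y + 1 \<le> h y) \<and> (y \<notin> B \<longrightarrow> h y + 1 \<le> (r(x := Suc j)) y)"
        proof (cases "x \<in> B")
          case True
          have "B - {x} \<subseteq> S" using B by auto
          with S(3) obtain h where h: "h \<in> HV x i" "\<forall>y\<in>S. (y\<in>B - {x} \<longrightarrow> r y + 1 \<le> h y) \<and> (y\<notin>B - {x} \<longrightarrow> h y + 1 \<le> r y)"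
            unfolding sshat_def by blast
          then have "h \<in> H" "h x = i" unfolding HV_def by auto
          then show ?thesis using h(2) True x(2) xS by (intro bexI[of _ h]) auto
        next
          case False
          have "B \<subseteq> S" using B False by auto
          with S(4) obtain h where h: "h \<in> HV x j" "\<forall>y\<in>S. (y\<in>B \<longrightarrow> r y + 1 \<le> h y) \<and> (y\<notin>B \<longrightarrow> h y + 1 \<le> r y)"
            unfolding sshat_def by blast
          then have "h \<in> H" "h x = j" unfolding HV_def by auto
          then show ?thesis using h(2) False xS by (intro bexI[of _ h]) auto
        qed
      qed
    qed
  qed
  have disj: "(A1 \<union> A2) \<inter> \<phi> ` (A1 \<inter> A2) = {}"
    unfolding A1_def A2_def Sh_def \<phi>_def \<Omega>'_def by force
  have inj: "inj_on \<phi> (A1 \<inter> A2)"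
  proof (rule inj_onI)
    fix p p' assume a: "p \<in> A1 \<inter> A2" "p' \<in> A1 \<inter> A2" "\<phi> p = \<phi> p'"
    obtain S r S' r' where pp: "p = (S,r)" "p' = (S',r')" by (cases p, cases p') auto
    have xS: "x \<notin> S" "x \<notin> S'" "r x = 0" "r' x = 0" using a(1,2) unfolding pp A1_def Sh_def \<Omega>'_def by auto
    from a(3) have e: "insert x S = insert x S'" "r(x := Suc j) = r'(x := Suc j)" unfolding \<phi>_def pp by auto
    from e(1) xS have "S = S'" by (metis Diff_insert_absorb)
    moreover have "r = r'"
    proof
      fix y show "r y = r' y" using fun_cong[OF e(2), of y] xS by (cases "y = x") auto
    qed
    ultimately show "p = p'" using pp by simp
  qed
  have finSh: "finite (Sh \<Omega> H)" using Sh_finite Suc.prems by blast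
  have "2^(Suc r) \<le> card A1 + card A2" using IHv[OF x(3)] IHv[OF x(4)] unfolding A1_def A2_def by simp
  also have "\<dots> = card (A1 \<union> A2) + card (A1 \<inter> A2)" using card_Un_Int finA by blast
  also have "\<dots> = card (A1 \<union> A2) + card (\<phi> ` (A1 \<inter> A2))" using card_image[OF inj] by simp
  also have "\<dots> = card ((A1 \<union> A2) \<union> \<phi> ` (A1 \<inter> A2))"
    using finA disj by (intro card_Un_disjoint[symmetric]) auto
  also have "\<dots> \<le> card (Sh \<Omega> H)" using sub1 sub2 finSh by (intro card_mono) auto
  finally show ?case .
qed

lemma sum_pow_le: "(\<Sum>i\<le>D. (N::nat)^i) \<le> (N+1)^D"
proof (induction D)
  case (Suc D)
  have "(\<Sum>i\<le>Suc D. N^i) = 1 + N * (\<Sum>i\<le>D. N^i)"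
    by (subst sum.atMost_Suc_shift) (simp add: sum_distrib_left)
  also have "\<dots> \<le> 1 + N * (N+1)^D" using Suc by simp
  also have "\<dots> \<le> (N+1)^Suc D" by (simp add: algebra_simps)
  finally show ?case .
qed simp

lemma card_small_subsets:
  assumes "finite \<Omega>"
  shows "card {S. S \<subseteq> \<Omega> \<and> card S \<le> D} \<le> (card \<Omega> + 1)^D"
proof -
  have "{S. S \<subseteq> \<Omega> \<and> card S \<le> D} \<subseteq> set ` {xs. set xs \<subseteq> \<Omega> \<and> length xs \<le> D}"
  proof
    fix S assume S: "S \<in> {S. S \<subseteq> \<Omega> \<and> card S \<le> D}"
    then have "finite S" using assms finite_subset by auto
    then obtain xs where "set xs = S" "distinct xs" using finite_distinct_list by blast
    then show "S \<in> set ` {xs. set xs \<subseteq> \<Omega> \<and> length xs \<le> D}" using S distinct_card[of xs] by auto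
  qed
  then have "card {S. S \<subseteq> \<Omega> \<and> card S \<le> D} \<le> card (set ` {xs. set xs \<subseteq> \<Omega> \<and> length xs \<le> D})"
    by (intro card_mono finite_imageI) (auto intro: finite_lists_length_le assms)
  also have "\<dots> \<le> card {xs. set xs \<subseteq> \<Omega> \<and> length xs \<le> D}" by (rule card_image_le) (auto intro: finite_lists_length_le assms)
  also have "\<dots> = (\<Sum>i\<le>D. card \<Omega>^i)" by (rule card_lists_length_le[OF assms])
  also have "\<dots> \<le> (card \<Omega> + 1)^D" by (rule sum_pow_le)
  finally show ?thesis .
qed

lemma Sh_card_le:
  assumes fin: "finite \<Omega>" and bd: "\<forall>h\<in>H. \<forall>y\<in>\<Omega>. h y \<le> b"
    and dim: "\<And>S r. S \<subseteq> \<Omega> \<Longrightarrow> sshat H S r \<Longrightarrow> card S \<le> D"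
  shows "card (Sh \<Omega> H) \<le> ((card \<Omega> + 1) * (b+1))^D"
proof -
  define SS where "SS = {S. S \<subseteq> \<Omega> \<and> card S \<le> D}"
  define ext where "ext S g = (\<lambda>y. if y \<in> S then g y else (0::nat))" for S and g :: "'a \<Rightarrow> nat"
  define R where "R S = ext S ` (PiE S (\<lambda>_. {..b}))" for S
  have finSS: "finite SS" unfolding SS_def using fin by auto
  have sub: "Sh \<Omega> H \<subseteq> (\<Union>S\<in>SS. {S} \<times> R S)"
  proof
    fix p assume "p \<in> Sh \<Omega> H"
    then obtain S r where p: "p = (S, r)" and S: "S \<subseteq> \<Omega>" "\<forall>y. y \<notin> S \<longrightarrow> r y = 0" "sshat H S r"
      unfolding Sh_def by auto
    have rb: "r y \<le> b" if "y \<in> S" for y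
    proof -
      from S(3) obtain h where "h \<in> H" "\<forall>y\<in>S. (y\<in>S \<longrightarrow> r y + 1 \<le> h y)"
        unfolding sshat_def by blast
      with that bd S(1) show ?thesis by fastforce
    qed
    have "r = ext S (restrict r S)" unfolding ext_def using S(2) by auto
    moreover have "restrict r S \<in> PiE S (\<lambda>_. {..b})" using rb by auto
    ultimately have "r \<in> R S" unfolding R_def by blast
    moreover have "S \<in> SS" unfolding SS_def using S dim by auto
    ultimately show "p \<in> (\<Union>S\<in>SS. {S} \<times> R S)" using p by auto
  qed
  have cR: "card ({S} \<times> R S) \<le> (b+1)^D" if "S \<in> SS" for S
  proof -
    have fS: "finite S" using that fin finite_subset unfolding SS_def by auto
    have "card ({S} \<times> R S) = card (R S)" by (simp add: card_cartesian_product_singleton)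
    also have "\<dots> \<le> card (PiE S (\<lambda>_. {..b}))" unfolding R_def
      by (rule card_image_le) (simp add: fS finite_PiE)
    also have "\<dots> = (b+1)^card S" using fS by (simp add: card_PiE)
    also have "\<dots> \<le> (b+1)^D" using that unfolding SS_def by (intro power_increasing) auto
    finally show ?thesis .
  qed
  have "card (Sh \<Omega> H) \<le> card (\<Union>S\<in>SS. {S} \<times> R S)"
  proof (rule card_mono[OF _ sub])
    have "finite (R S)" if "S \<in> SS" for S
    proof -
      have "finite S" using that fin finite_subset unfolding SS_def by auto
      then show ?thesis unfolding R_def by (intro finite_imageI finite_PiE) auto
    qed
    then show "finite (\<Union>S\<in>SS. {S} \<times> R S)" using finSS by auto
  qed
  also have "\<dots> \<le> (\<Sum>S\<in>SS. card ({S} \<times> R S))" by (rule card_UN_le[OF finSS])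
  also have "\<dots> \<le> (\<Sum>S\<in>SS. (b+1)^D)" by (intro sum_mono cR)
  also have "\<dots> = card SS * (b+1)^D" by simp
  also have "\<dots> \<le> (card \<Omega> + 1)^D * (b+1)^D" unfolding SS_def using card_small_subsets[OF fin] by simp
  also have "\<dots> = ((card \<Omega> + 1) * (b+1))^D" by (rule power_mult_distrib[symmetric])
  finally show ?thesis .
qed

lemma subsample:
  fixes P :: "('z \<Rightarrow> real) set" and z :: "nat \<Rightarrow> 'z" and \<delta> q :: real and m n :: nat
  assumes finP: "finite P" and n: "n > 0" and q: "0 < q" "q \<le> 1"
    and sepP: "\<forall>f\<in>P. \<forall>f'\<in>P. f \<noteq> f' \<longrightarrow> q * n \<le> card {i\<in>{..<n}. \<delta> \<le> \<bar>f (z i) - f' (z i)\<bar>}"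
    and mbig: "real (card P)^2 < exp (q * m)"
  shows "\<exists>s. (\<forall>j<m. s j < n) \<and> (\<forall>f\<in>P. \<forall>f'\<in>P. f \<noteq> f' \<longrightarrow> (\<exists>j<m. \<delta> \<le> \<bar>f (z (s j)) - f' (z (s j))\<bar>))"
proof (rule ccontr)
  assume nex: "\<not> ?thesis"
  define U where "U = PiE {..<m} (\<lambda>_. {..<n})"
  define T where "T f f' = {i\<in>{..<n}. \<delta> \<le> \<bar>f (z i) - f' (z i)\<bar>}" for f f' :: "'z \<Rightarrow> real"
  define Bad where "Bad f f' = PiE {..<m} (\<lambda>_. {..<n} - T f f')" for f f'
  define Pairs where "Pairs = {pp \<in> P \<times> P. fst pp \<noteq> snd pp}"
  have finPairs: "finite Pairs" unfolding Pairs_def using finP by auto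
  have cPairs: "card Pairs \<le> card P ^ 2"
  proof -
    have "card Pairs \<le> card (P \<times> P)" unfolding Pairs_def using finP by (intro card_mono) auto
    then show ?thesis by (simp add: card_cartesian_product power2_eq_square)
  qed
  have Usub: "U \<subseteq> (\<Union>pp\<in>Pairs. Bad (fst pp) (snd pp))"
  proof
    fix s assume sU: "s \<in> U"
    then have sl: "\<forall>j<m. s j < n" unfolding U_def by auto
    have ns: "\<not> ((\<forall>j<m. s j < n) \<and> (\<forall>f\<in>P. \<forall>f'\<in>P. f \<noteq> f' \<longrightarrow> (\<exists>j<m. \<delta> \<le> \<bar>f (z (s j)) - f' (z (s j))\<bar>)))"
      using spec[OF nex[unfolded not_ex], of s] .
    from ns sl obtain f f' where ff: "f \<in> P" "f' \<in> P" "f \<noteq> f'" "\<forall>j<m. \<not> \<delta> \<le> \<bar>f (z (s j)) - f' (z (s j))\<bar>"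
      by blast
    have "s \<in> Bad f f'" unfolding Bad_def
    proof (rule PiE_I)
      fix j assume "j \<in> {..<m}"
      then show "s j \<in> {..<n} - T f f'" using sl ff(4) unfolding T_def by auto
    next
      fix j assume "j \<notin> {..<m}"
      then show "s j = undefined" using sU unfolding U_def PiE_def extensional_def by auto
    qed
    moreover have "(f, f') \<in> Pairs" using ff unfolding Pairs_def by auto
    ultimately show "s \<in> (\<Union>pp\<in>Pairs. Bad (fst pp) (snd pp))" by force
  qed
  have cBad: "real (card (Bad f f')) \<le> real n ^ m * exp (- q * m)" if "(f, f') \<in> Pairs" for f f'
  proof -
    have Tsub: "T f f' \<subseteq> {..<n}" unfolding T_def by auto
    have cT: "q * n \<le> card (T f f')" using sepP that unfolding Pairs_def T_def by auto
    have "card (Bad f f') = (n - card (T f f'))^m"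
      unfolding Bad_def by (simp add: card_PiE card_Diff_subset[OF finite_subset[OF Tsub] Tsub])
    then have "real (card (Bad f f')) = (real n - card (T f f'))^m"
      using card_mono[OF _ Tsub] by (simp add: of_nat_diff)
    also have "\<dots> \<le> (real n * (1 - q))^m"
      using cT card_mono[OF _ Tsub] by (intro power_mono) (auto simp: algebra_simps)
    also have "\<dots> = real n ^ m * (1 - q)^m" by (simp add: power_mult_distrib)
    also have "\<dots> \<le> real n ^ m * exp (-q)^m"
    proof (intro mult_left_mono power_mono)
      show "1 - q \<le> exp (- q)" using exp_ge_add_one_self[of "-q"] by simp
    qed (use q in auto)
    also have "\<dots> = real n ^ m * exp (- q * m)" by (simp add: exp_of_nat_mult[symmetric] mult.commute)
    finally show ?thesis .
  qed
  have "real n ^ m = real (card U)" unfolding U_def by (simp add: card_PiE)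
  also have "\<dots> \<le> real (card (\<Union>pp\<in>Pairs. Bad (fst pp) (snd pp)))"
  proof -
    have "finite (\<Union>pp\<in>Pairs. Bad (fst pp) (snd pp))" using finPairs unfolding Bad_def by (auto intro!: finite_PiE)
    then show ?thesis using card_mono[OF _ Usub] by simp
  qed
  also have "\<dots> \<le> real (\<Sum>pp\<in>Pairs. card (Bad (fst pp) (snd pp)))"
    using card_UN_le[OF finPairs] by (simp only: of_nat_le_iff)
  also have "\<dots> = (\<Sum>pp\<in>Pairs. real (card (Bad (fst pp) (snd pp))))" by simp
  also have "\<dots> \<le> (\<Sum>pp\<in>Pairs. real n ^ m * exp (- q * m))"
    by (intro sum_mono) (use cBad in auto)
  also have "\<dots> = real (card Pairs) * (real n ^ m * exp (- q * m))" by simp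
  also have "\<dots> \<le> real (card P)^2 * (real n ^ m * exp (- q * m))"
    using cPairs by (intro mult_right_mono) (auto simp: of_nat_power[symmetric] simp del: of_nat_power)
  also have "\<dots> < exp (q * m) * (real n ^ m * exp (- q * m))"
    using mbig n by (intro mult_strict_right_mono) auto
  also have "\<dots> = real n ^ m" by (simp add: exp_minus field_simps)
  finally show False by simp
qed

lemma Max_lip:
  fixes f f' :: "'i \<Rightarrow> real"
  assumes "finite I" "I \<noteq> {}" "\<forall>k\<in>I. \<bar>f k - f' k\<bar> \<le> \<delta>"
  shows "\<bar>Max (f ` I) - Max (f' ` I)\<bar> \<le> \<delta>"
proof -
  have one: "Max (g ` I) \<le> Max (g' ` I) + \<delta>" if "\<forall>k\<in>I. \<bar>g k - g' k\<bar> \<le> \<delta>" for g g' :: "'i \<Rightarrow> real"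
  proof -
    have "Max (g ` I) \<in> g ` I" using assms(1,2) by (intro Max_in) auto
    then obtain k where k: "k \<in> I" "Max (g ` I) = g k" by auto
    have "g k \<le> g' k + \<delta>" using that k(1) by auto
    also have "g' k \<le> Max (g' ` I)" using k(1) assms(1) by auto
    finally show ?thesis using k(2) by linarith
  qed
  have "Max (f ` I) \<le> Max (f' ` I) + \<delta>" using one assms(3) by blast
  moreover have "Max (f' ` I) \<le> Max (f ` I) + \<delta>" using one[of f' f] assms(3) by (simp add: abs_minus_commute)
  ultimately show ?thesis by linarith
qed

lemma clip_lip: "\<bar>max 0 (min \<gamma> a) - max 0 (min \<gamma> b)\<bar> \<le> \<bar>a - b\<bar>" for a b \<gamma> :: real
  by (simp only: max_def min_def) (auto split: if_splits)

lemma margin_lip: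
  fixes g g' :: "nat \<Rightarrow> 'x \<Rightarrow> real"
  assumes C: "C \<ge> 2" and y: "y \<in> {1..C}" and d: "\<forall>k\<in>{1..C}. \<bar>g k x - g' k x\<bar> \<le> \<delta>"
  shows "\<bar>margin_fun C \<gamma> g (x, y) - margin_fun C \<gamma> g' (x, y)\<bar> \<le> \<delta>"
proof -
  have eq: "{h k x | k. k \<in> {1..C} \<and> k \<noteq> y} = (\<lambda>k. h k x) ` ({1..C} - {y})" for h :: "nat \<Rightarrow> 'x \<Rightarrow> real"
    by auto
  have ne: "{1..C} - {y} \<noteq> {}"
  proof -
    have "(if y = 1 then 2 else 1) \<in> {1..C} - {y}" using C y by auto
    then show ?thesis by blast
  qed
  have M: "\<bar>Max ((\<lambda>k. g k x) ` ({1..C} - {y})) - Max ((\<lambda>k. g' k x) ` ({1..C} - {y}))\<bar> \<le> \<delta>"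
    using d by (intro Max_lip[OF _ ne]) auto
  have a: "\<bar>g y x - g' y x\<bar> \<le> \<delta>" using d y by auto
  define a1 where "a1 = (g y x - Max ((\<lambda>k. g k x) ` ({1..C} - {y}))) / 2"
  define a2 where "a2 = (g' y x - Max ((\<lambda>k. g' k x) ` ({1..C} - {y}))) / 2"
  define M1 where "M1 = Max ((\<lambda>k. g k x) ` ({1..C} - {y}))"
  define M2 where "M2 = Max ((\<lambda>k. g' k x) ` ({1..C} - {y}))"
  have "a1 - a2 = ((g y x - g' y x) - (M1 - M2)) / 2" unfolding a1_def a2_def M1_def M2_def by (simp add: field_simps)
  moreover have "\<bar>(g y x - g' y x) - (M1 - M2)\<bar> \<le> 2 * \<delta>" using M a unfolding M1_def M2_def by linarith
  ultimately have "\<bar>a1 - a2\<bar> \<le> \<delta>" by simp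
  then have "\<bar>max 0 (min \<gamma> a1) - max 0 (min \<gamma> a2)\<bar> \<le> \<delta>" using clip_lip[of \<gamma> a1 a2] by linarith
  moreover have "margin_fun C \<gamma> h (x, y) = max 0 (min \<gamma> ((h y x - Max ((\<lambda>k. h k x) ` ({1..C} - {y}))) / 2))" for h
    unfolding margin_fun_def by (simp only: case_prod_conv eq)
  ultimately show ?thesis unfolding a1_def a2_def by simp
qed

lemma margin_sep:
  fixes g g' :: "nat \<Rightarrow> 'x \<Rightarrow> real"
  assumes C: "C \<ge> 2" and y: "y \<in> {1..C}"
    and s: "t \<le> \<bar>margin_fun C \<gamma> g (x, y) - margin_fun C \<gamma> g' (x, y)\<bar>"
  shows "\<exists>k\<in>{1..C}. t \<le> \<bar>g k x - g' k x\<bar>"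
proof -
  define \<delta> where "\<delta> = Max ((\<lambda>k. \<bar>g k x - g' k x\<bar>) ` {1..C})"
  have "{1..C} \<noteq> {}" using C by auto
  then have "\<delta> \<in> (\<lambda>k. \<bar>g k x - g' k x\<bar>) ` {1..C}" unfolding \<delta>_def by (intro Max_in) auto
  then obtain k where k: "k \<in> {1..C}" "\<delta> = \<bar>g k x - g' k x\<bar>" by auto
  have "\<forall>k\<in>{1..C}. \<bar>g k x - g' k x\<bar> \<le> \<delta>" unfolding \<delta>_def by auto
  then have "\<bar>margin_fun C \<gamma> g (x, y) - margin_fun C \<gamma> g' (x, y)\<bar> \<le> \<delta>" by (rule margin_lip[OF C y])
  then show ?thesis using s k by (intro bexI[of _ k]) auto
qed

lemma nat_floor_props:
  fixes a \<eta> :: real assumes "0 \<le> a" "0 < \<eta>"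
  shows "real (nat \<lfloor>a / \<eta>\<rfloor>) * \<eta> \<le> a" "a < (real (nat \<lfloor>a / \<eta>\<rfloor>) + 1) * \<eta>"
proof -
  have nn: "0 \<le> \<lfloor>a / \<eta>\<rfloor>" using assms by simp
  have e: "real (nat \<lfloor>a / \<eta>\<rfloor>) = real_of_int \<lfloor>a / \<eta>\<rfloor>" using nn by simp
  have "real_of_int \<lfloor>a / \<eta>\<rfloor> \<le> a / \<eta>" by simp
  then show "real (nat \<lfloor>a / \<eta>\<rfloor>) * \<eta> \<le> a" using e assms by (simp add: le_divide_eq)
  have "a / \<eta> < real_of_int \<lfloor>a / \<eta>\<rfloor> + 1" by linarith
  then have "a < (real_of_int \<lfloor>a / \<eta>\<rfloor> + 1) * \<eta>" using assms(2) pos_divide_less_eq by blast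
  then show "a < (real (nat \<lfloor>a / \<eta>\<rfloor>) + 1) * \<eta>" using e by simp
qed

lemma dim_bound:
  fixes Gs :: "(nat \<Rightarrow> (real^'d) \<Rightarrow> real) set" and w :: "nat \<Rightarrow> real^'d"
    and G0 :: "((real^'d) \<Rightarrow> real) set" and H :: "(nat \<times> nat \<Rightarrow> nat) set" and r :: "nat \<times> nat \<Rightarrow> nat"
  assumes Gs: "Gs \<subseteq> prod_class C G0" and w: "\<forall>j<m. w j \<in> cube A"
    and nonneg: "\<forall>g\<in>Gs. \<forall>k\<in>{1..C}. \<forall>j<m. 0 \<le> g k (w j)"
    and eta: "0 < \<eta>" "t \<le> \<eta> / 2"
    and fd: "fat_dim G0 (cube A) t = enat d"
    and H: "H = (\<lambda>g. (\<lambda>(j,k). nat \<lfloor>g k (w j) / \<eta>\<rfloor>)) ` Gs"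
    and S: "S \<subseteq> {..<m} \<times> {1..C}" and sh: "sshat H S r"
  shows "card S \<le> C * d"
proof -
  define Sk where "Sk k = {j. (j,k) \<in> S}" for k
  have Sk_sub: "Sk k \<subseteq> {..<m}" if "k \<in> {1..C}" for k using S unfolding Sk_def by auto
  have getH: "\<exists>g\<in>Gs. \<forall>y\<in>S. (y\<in>B \<longrightarrow> r y + 1 \<le> nat \<lfloor>g (snd y) (w (fst y)) / \<eta>\<rfloor>) \<and> (y\<notin>B \<longrightarrow> nat \<lfloor>g (snd y) (w (fst y)) / \<eta>\<rfloor> + 1 \<le> r y)"
    if "B \<subseteq> S" for B
  proof -
    from sh that obtain h where h: "h \<in> H" "\<forall>y\<in>S. (y\<in>B \<longrightarrow> r y + 1 \<le> h y) \<and> (y\<notin>B \<longrightarrow> h y + 1 \<le> r y)"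
      unfolding sshat_def by blast
    from h(1) obtain g where g: "g \<in> Gs" "h = (\<lambda>(j,k). nat \<lfloor>g k (w j) / \<eta>\<rfloor>)" using H by auto
    show ?thesis using h(2) g by (intro bexI[OF _ g(1)]) (auto simp: case_prod_beta)
  qed
  have cSk: "card (Sk k) \<le> d" if k: "k \<in> {1..C}" for k
  proof -
    have finSk: "finite (Sk k)" using Sk_sub[OF k] finite_subset by blast
    have inj: "inj_on w (Sk k)"
    proof (rule inj_onI, rule ccontr)
      fix j1 j2 assume j: "j1 \<in> Sk k" "j2 \<in> Sk k" "w j1 = w j2" "j1 \<noteq> j2"
      have S12: "(j1,k) \<in> S" "(j2,k) \<in> S" using j unfolding Sk_def by auto
      obtain g1 where g1: "r (j1,k) + 1 \<le> nat \<lfloor>g1 k (w j1) / \<eta>\<rfloor>" "nat \<lfloor>g1 k (w j2) / \<eta>\<rfloor> + 1 \<le> r (j2,k)"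
        using getH[of "{(j1,k)}"] S12 j(4) by fastforce
      obtain g2 where g2: "r (j2,k) + 1 \<le> nat \<lfloor>g2 k (w j2) / \<eta>\<rfloor>" "nat \<lfloor>g2 k (w j1) / \<eta>\<rfloor> + 1 \<le> r (j1,k)"
        using getH[of "{(j2,k)}"] S12 j(4) by fastforce
      show False using g1 g2 j(3) by simp
    qed
    define sw where "sw x = (real (r (inv_into (Sk k) w x, k)) + 1/2) * \<eta>" for x
    have fs: "fat_shatters G0 (cube A) t (w ` Sk k)"
      unfolding fat_shatters_def
    proof (intro conjI exI[of _ sw] allI impI)
      show "finite (w ` Sk k)" using finSk by simp
      show "w ` Sk k \<subseteq> cube A" using w Sk_sub[OF k] by auto
      fix B assume B: "B \<subseteq> w ` Sk k"
      define B' where "B' = {(j,k) | j. j \<in> Sk k \<and> w j \<in> B}"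
      have "B' \<subseteq> S" unfolding B'_def Sk_def by auto
      from getH[OF this] obtain g where g: "g \<in> Gs"
        "\<forall>y\<in>S. (y\<in>B' \<longrightarrow> r y + 1 \<le> nat \<lfloor>g (snd y) (w (fst y)) / \<eta>\<rfloor>) \<and> (y\<notin>B' \<longrightarrow> nat \<lfloor>g (snd y) (w (fst y)) / \<eta>\<rfloor> + 1 \<le> r y)"
        by blast
      have gk: "g k \<in> G0" using g(1) Gs k unfolding prod_class_def by auto
      show "\<exists>f\<in>G0. \<forall>x\<in>w ` Sk k. (x \<in> B \<longrightarrow> t \<le> f x - sw x) \<and> (x \<notin> B \<longrightarrow> t \<le> sw x - f x)"
      proof (intro bexI[OF _ gk] ballI conjI impI)
        fix x assume x: "x \<in> w ` Sk k"
        then obtain j where j: "j \<in> Sk k" "x = w j" by auto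
        have iv: "inv_into (Sk k) w x = j" using j inv_into_f_f[OF inj j(1)] by simp
        have jS: "(j,k) \<in> S" using j unfolding Sk_def by auto
        have a0: "0 \<le> g k (w j)" using nonneg g(1) k Sk_sub[OF k] j(1) by auto
        note fl = nat_floor_props[OF a0 eta(1)]
        {
          assume "x \<in> B"
          then have "(j,k) \<in> B'" unfolding B'_def using j by auto
          then have "r (j,k) + 1 \<le> nat \<lfloor>g k (w j) / \<eta>\<rfloor>" using g(2) jS by auto
          then have "real (r (j,k)) + 1 \<le> real (nat \<lfloor>g k (w j) / \<eta>\<rfloor>)" by linarith
          then have "(real (r (j,k)) + 1) * \<eta> \<le> g k (w j)" using fl(1) eta(1)
            by (meson mult_right_mono less_imp_le order_trans)
          then show "t \<le> g k x - sw x" unfolding sw_def iv using j(2) eta by (simp add: algebra_simps)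
        }
        {
          assume "x \<notin> B"
          then have "(j,k) \<notin> B'" unfolding B'_def using j by auto
          then have "nat \<lfloor>g k (w j) / \<eta>\<rfloor> + 1 \<le> r (j,k)" using g(2) jS by auto
          then have "real (nat \<lfloor>g k (w j) / \<eta>\<rfloor>) + 1 \<le> real (r (j,k))" by linarith
          then have "g k (w j) < real (r (j,k)) * \<eta>" using fl(2) eta(1)
            by (smt (verit) mult_right_mono)
          then show "t \<le> sw x - g k x" unfolding sw_def iv using j(2) eta by (simp add: algebra_simps)
        }
      qed
    qed
    have "enat (card (w ` Sk k)) \<le> fat_dim G0 (cube A) t"
      unfolding fat_dim_def using fs by (intro Sup_upper) auto
    then have "card (w ` Sk k) \<le> d" using fd by simp
    then show ?thesis using card_image[OF inj] by simp
  qed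
  have "S \<subseteq> (\<Union>k\<in>{1..C}. (\<lambda>j. (j,k)) ` Sk k)" using S unfolding Sk_def by auto
  then have "card S \<le> card (\<Union>k\<in>{1..C}. (\<lambda>j. (j,k)) ` Sk k)"
    by (intro card_mono) (auto intro!: finite_imageI finite_subset[OF Sk_sub])
  also have "\<dots> \<le> (\<Sum>k\<in>{1..C}. card ((\<lambda>j. (j,k)) ` Sk k))" by (rule card_UN_le) simp
  also have "\<dots> \<le> (\<Sum>k\<in>{1..C}. d)" by (intro sum_mono order_trans[OF card_image_le cSk]) (auto intro: finite_subset[OF Sk_sub])
  also have "\<dots> = C * d" by simp
  finally show ?thesis .
qed

lemma pack_cover:
  fixes F :: "'a set" and \<rho> :: "'a \<Rightarrow> 'a \<Rightarrow> real"
  assumes r0: "\<forall>f\<in>F. \<rho> f f < \<epsilon>" and sym: "\<forall>f g. \<rho> f g = \<rho> g f"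
    and bnd: "\<And>P. finite P \<Longrightarrow> P \<subseteq> F \<Longrightarrow> (\<forall>f\<in>P. \<forall>g\<in>P. f \<noteq> g \<longrightarrow> \<epsilon> \<le> \<rho> f g) \<Longrightarrow> card P \<le> K"
  shows "covering_number \<epsilon> F \<rho> \<noteq> \<infinity> \<and> the_enat (covering_number \<epsilon> F \<rho>) \<le> K"
proof -
  define sepd where "sepd P \<longleftrightarrow> finite P \<and> P \<subseteq> F \<and> (\<forall>f\<in>P. \<forall>g\<in>P. f \<noteq> g \<longrightarrow> \<epsilon> \<le> \<rho> f g)" for P
  define Cs where "Cs = card ` {P. sepd P}"
  have Csb: "Cs \<subseteq> {..K}" unfolding Cs_def sepd_def using bnd by auto
  have "0 \<in> Cs" unfolding Cs_def sepd_def by (intro image_eqI[of _ _ "{}"]) auto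
  then have "Max Cs \<in> Cs" using Csb finite_subset by (intro Max_in) auto
  then obtain P where P: "sepd P" "card P = Max Cs" unfolding Cs_def by auto
  have cov: "\<forall>f\<in>F. \<exists>g\<in>P. \<rho> f g < \<epsilon>"
  proof (rule ccontr)
    assume "\<not> ?thesis"
    then obtain f where f: "f \<in> F" "\<forall>g\<in>P. \<epsilon> \<le> \<rho> f g" by (auto simp: not_less)
    have fP: "f \<notin> P" using f r0 by fastforce
    have "sepd (insert f P)" using P(1) f sym unfolding sepd_def by auto
    then have "card (insert f P) \<in> Cs" unfolding Cs_def by auto
    then have "card (insert f P) \<le> Max Cs" using Csb finite_subset by (intro Max_ge) auto
    moreover have "card (insert f P) = card P + 1" using fP P(1) unfolding sepd_def by simp
    ultimately show False using P(2) by simp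
  qed
  have "covering_number \<epsilon> F \<rho> \<le> enat (card P)"
    unfolding covering_number_def using P(1) cov unfolding sepd_def by (intro Inf_lower) auto
  moreover have "card P \<le> K" using P(1) bnd unfolding sepd_def by auto
  ultimately show ?thesis
    by (metis enat_ord_simps(1) enat_ord_simps(3) infinity_ileE order_trans the_enat.simps enat_ile)
qed

lemma floor_sep:
  fixes a a' \<eta> :: real assumes "0 \<le> a" "0 \<le> a'" "0 < \<eta>" "3 * \<eta> \<le> \<bar>a - a'\<bar>"
  shows "nat \<lfloor>a' / \<eta>\<rfloor> + 2 \<le> nat \<lfloor>a / \<eta>\<rfloor> \<or> nat \<lfloor>a / \<eta>\<rfloor> + 2 \<le> nat \<lfloor>a' / \<eta>\<rfloor>"
proof -
  have one: "nat \<lfloor>c' / \<eta>\<rfloor> + 2 \<le> nat \<lfloor>c / \<eta>\<rfloor>" if "0 \<le> c'" "c' + 3 * \<eta> \<le> c" for c c' :: real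
  proof -
    have "(c' + 3 * \<eta>) / \<eta> \<le> c / \<eta>" using that assms(3) by (intro divide_right_mono) auto
    then have "c' / \<eta> + 3 \<le> c / \<eta>" using assms(3) by (simp add: add_divide_distrib)
    then have "\<lfloor>c' / \<eta>\<rfloor> + 3 \<le> \<lfloor>c / \<eta>\<rfloor>" by linarith
    moreover have "0 \<le> \<lfloor>c' / \<eta>\<rfloor>" using that assms(3) by simp
    ultimately show ?thesis by linarith
  qed
  show ?thesis
  proof (cases "a' \<le> a")
    case True then show ?thesis using one[of a' a] assms by (simp add: abs_if split: if_splits)
  next
    case False then show ?thesis using one[of a a'] assms by (simp add: abs_if split: if_splits)
  qed
qed

lemma log_bound:
  fixes Q p D :: nat
  assumes Q: "Q \<ge> 4" and D: "D \<ge> 1" and p: "p > 0"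
    and lt: "p < Q ^ (D * nat \<lceil>log 2 Q\<rceil> + 1)"
  shows "ln (real p) \<le> 4 * real D * (ln (real Q))^2"
proof -
  define L0 where "L0 = ln (real Q)"
  define k where "k = nat \<lceil>log 2 Q\<rceil>"
  have L01: "L0 \<ge> 1"
  proof -
    have "exp 1 \<le> real Q" using exp_le Q by linarith
    then show ?thesis unfolding L0_def using Q by (metis ln_exp ln_le_cancel_iff exp_gt_zero order_less_le_trans)
  qed
  have "ln (real p) < ln (real Q ^ (D * k + 1))"
  proof (subst ln_less_cancel_iff)
    have "real p < real (Q ^ (D * k + 1))" using lt unfolding k_def by (simp only: of_nat_less_iff)
    then show "real p < real Q ^ (D * k + 1)" by simp
  qed (use p Q in auto)
  also have "\<dots> = (D * k + 1) * L0" unfolding L0_def using Q by (subst ln_realpow) auto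
  finally have a: "ln (real p) < (D * k + 1) * L0" .
  have lg: "log 2 Q = L0 / ln 2" unfolding L0_def log_def by simp
  have "L0 / ln 2 \<le> 3/2 * L0" using ln2_ge_two_thirds L01 by (simp add: field_simps)
  moreover have "real k \<le> log 2 Q + 1"
  proof -
    have "0 \<le> log 2 (real Q)" using Q by simp
    then have "real k = real_of_int \<lceil>log 2 (real Q)\<rceil>" unfolding k_def by simp
    then show ?thesis using ceiling_correct[of "log 2 Q"] by linarith
  qed
  ultimately have kb: "real k \<le> 3/2 * L0 + 1" using lg by linarith
  have "(D * k + 1) * L0 = real D * real k * L0 + L0" by (simp add: algebra_simps)
  also have "\<dots> \<le> real D * (3/2 * L0 + 1) * L0 + L0"
    using kb L01 by (intro add_right_mono mult_right_mono mult_left_mono) auto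
  also have "\<dots> = 3/2 * (real D * L0^2) + real D * L0 + L0" by (simp add: algebra_simps power2_eq_square)
  also have "\<dots> \<le> 4 * real D * L0^2"
  proof -
    have h1: "L0 \<le> L0^2" using L01 by (simp add: power2_eq_square)
    have h2: "real D * L0 \<le> real D * L0^2" using h1 by (intro mult_left_mono) auto
    have h3: "L0 \<le> real D * L0" using D L01 by (simp add: mult_le_cancel_right1)
    have "0 \<le> real D * L0^2" by simp
    have h4: "4 * real D * L0^2 = 4 * (real D * L0^2)" by simp
    have "3 / 2 * (real D * L0^2) + real D * L0 + L0 \<le> 4 * (real D * L0^2)"
      using h2 h3 \<open>0 \<le> real D * L0^2\<close> by linarith
    then show ?thesis using h4 by simp
  qed
  finally show ?thesis using a unfolding L0_def by linarith
qed

lemma margin_range: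
  assumes "0 < \<gamma>" shows "0 \<le> margin_fun C \<gamma> g z \<and> margin_fun C \<gamma> g z \<le> \<gamma>"
  unfolding margin_fun_def using assms by (auto split: prod.splits)

lemma sep_count:
  fixes f f' :: "'z \<Rightarrow> real" and z :: "nat \<Rightarrow> 'z"
  assumes n: "n > 0" and e: "0 < \<epsilon>" and rng: "\<forall>x. \<bar>f x - f' x\<bar> \<le> 1"
    and d: "\<epsilon> \<le> d2 n z f f'"
  shows "\<epsilon>^2 / 2 * n \<le> card {i\<in>{..<n}. \<epsilon>/2 \<le> \<bar>f (z i) - f' (z i)\<bar>}"
proof -
  define T where "T = {i\<in>{..<n}. \<epsilon>/2 \<le> \<bar>f (z i) - f' (z i)\<bar>}"
  define \<Delta> where "\<Delta> i = \<bar>f (z i) - f' (z i)\<bar>^2" for i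
  have s0: "0 \<le> (1 / real n) * (\<Sum>i<n. \<Delta> i)" unfolding \<Delta>_def by (intro mult_nonneg_nonneg sum_nonneg) auto
  have "\<epsilon>^2 \<le> (sqrt ((1 / real n) * (\<Sum>i<n. \<Delta> i)))^2"
    using d e unfolding d2_def \<Delta>_def by (intro power_mono) auto
  then have "\<epsilon>^2 \<le> (1 / real n) * (\<Sum>i<n. \<Delta> i)" using s0 by simp
  then have A: "n * \<epsilon>^2 \<le> (\<Sum>i<n. \<Delta> i)" using n by (simp add: field_simps)
  have TS: "T \<subseteq> {..<n}" unfolding T_def by auto
  have "(\<Sum>i<n. \<Delta> i) = (\<Sum>i\<in>T. \<Delta> i) + (\<Sum>i\<in>{..<n} - T. \<Delta> i)"
    using TS by (simp add: sum.subset_diff)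
  also have "\<dots> \<le> (\<Sum>i\<in>T. 1) + (\<Sum>i\<in>{..<n} - T. \<epsilon>^2/4)"
  proof (intro add_mono sum_mono)
    fix i have "\<bar>f (z i) - f' (z i)\<bar> \<le> 1" using rng by blast
    then have "\<bar>f (z i) - f' (z i)\<bar>^2 \<le> 1" by (intro power_le_one) auto
    then show "\<Delta> i \<le> 1" unfolding \<Delta>_def .
  next
    fix i assume "i \<in> {..<n} - T"
    then have "\<bar>f (z i) - f' (z i)\<bar> \<le> \<epsilon>/2" unfolding T_def by auto
    then have "\<Delta> i \<le> (\<epsilon>/2)^2" unfolding \<Delta>_def by (intro power_mono) auto
    then show "\<Delta> i \<le> \<epsilon>^2/4" by (simp add: power_divide)
  qed
  also have "\<dots> = card T + card ({..<n} - T) * (\<epsilon>^2/4)" by simp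
  also have "\<dots> \<le> card T + n * (\<epsilon>^2/4)"
  proof -
    have "card ({..<n} - T) \<le> n" by (metis card_lessThan card_Diff_subset finite_lessThan TS finite_subset diff_le_self)
    then show ?thesis by (intro add_left_mono mult_right_mono) auto
  qed
  finally have "n * \<epsilon>^2 \<le> card T + n * (\<epsilon>^2/4)" using A by linarith
  moreover have "0 \<le> n * \<epsilon>^2" by simp
  ultimately show ?thesis unfolding T_def[symmetric] by (simp add: field_simps)
qed

lemma core:
  fixes C :: nat and A M \<gamma> \<epsilon> :: real and n d :: nat
    and G0 :: "((real^'d) \<Rightarrow> real) set"
    and z :: "nat \<Rightarrow> (real^'d) \<times> nat" and P :: "((real^'d) \<times> nat \<Rightarrow> real) set"
  assumes C: "C > 2" and M: "M \<ge> 1" and G0b: "\<forall>f\<in>G0. \<forall>x\<in>cube A. 0 \<le> f x \<and> f x \<le> M"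
    and \<gamma>: "0 < \<gamma>" "\<gamma> \<le> 1" and \<epsilon>: "0 < \<epsilon>" "\<epsilon> \<le> \<gamma>"
    and fd: "fat_dim G0 (cube A) (\<epsilon> / 384) = enat d" and d1: "d \<ge> 1"
    and n: "n > 0" and z: "\<forall>i<n. z i \<in> Zset A C"
    and Pf: "finite P" and PF: "P \<subseteq> margin_class C \<gamma> (prod_class C G0)"
    and Psep: "\<forall>f\<in>P. \<forall>f'\<in>P. f \<noteq> f' \<longrightarrow> \<epsilon> \<le> d2 n z f f'"
    and p3: "card P \<ge> 3"
  shows "ln (card P) \<le> 4 * real (C * d) * (ln (42 * C * M * ln (card P) / \<epsilon>^3))^2"
proof -
  define p where "p = card P"
  define X where "X = ln (real p)"
  have p0: "real p > 0" using p3 unfolding p_def by simp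
  have X1: "X \<ge> 1"
  proof -
    have "exp 1 \<le> real p" using exp_le p3 unfolding p_def by linarith
    then show ?thesis unfolding X_def using p0 by (metis ln_exp ln_le_cancel_iff exp_gt_zero)
  qed
  have \<epsilon>1: "\<epsilon> \<le> 1" using \<epsilon> \<gamma> by linarith
  define q where "q = \<epsilon>^2 / 2"
  have e21: "\<epsilon>^2 \<le> 1" using \<epsilon> \<epsilon>1 by (intro power_le_one) auto
  have q: "0 < q" "q \<le> 1" unfolding q_def using \<epsilon> e21 by auto
  have rngP: "\<forall>x. \<bar>f x - f' x\<bar> \<le> 1" if ff: "f \<in> P" "f' \<in> P" for f f'
  proof
    fix x
    obtain g where "f = margin_fun C \<gamma> g" using ff PF unfolding margin_class_def by auto
    then have "0 \<le> f x \<and> f x \<le> \<gamma>" using margin_range[OF \<gamma>(1), of C _ x] by auto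
    moreover obtain g' where "f' = margin_fun C \<gamma> g'" using ff PF unfolding margin_class_def by auto
    then have "0 \<le> f' x \<and> f' x \<le> \<gamma>" using margin_range[OF \<gamma>(1), of C _ x] by auto
    ultimately show "\<bar>f x - f' x\<bar> \<le> 1" using \<gamma> by linarith
  qed
  have sepc: "\<forall>f\<in>P. \<forall>f'\<in>P. f \<noteq> f' \<longrightarrow> q * n \<le> card {i\<in>{..<n}. \<epsilon>/2 \<le> \<bar>f (z i) - f' (z i)\<bar>}"
    unfolding q_def using sep_count[OF n \<epsilon>(1) rngP] Psep by blast
  define m where "m = nat \<lfloor>4 * X / \<epsilon>^2\<rfloor> + 1"
  have mreal: "real m = real_of_int \<lfloor>4 * X / \<epsilon>^2\<rfloor> + 1"
    unfolding m_def using X1 \<epsilon> by simp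
  have m_lo: "4 * X / \<epsilon>^2 < real m" using mreal by linarith
  have m_hi: "real m \<le> 4 * X / \<epsilon>^2 + 1" using mreal by linarith
  have m1: "m \<ge> 1" unfolding m_def by simp
  have mbig: "real (card P)^2 < exp (q * m)"
  proof -
    have "exp (2 * X) = exp (X + X)" by simp
    also have "\<dots> = exp X * exp X" by (rule exp_add)
    also have "\<dots> = real p * real p" unfolding X_def using p0 by simp
    finally have "real (card P)^2 = exp (2 * X)" unfolding p_def by (simp add: power2_eq_square)
    also have "\<dots> < exp (q * m)"
    proof -
      have "q * (4 * X / \<epsilon>^2) = 2 * X" unfolding q_def using \<epsilon> by (simp add: field_simps)
      moreover have "q * (4 * X / \<epsilon>^2) < q * m" using m_lo q by (intro mult_strict_left_mono) auto
      ultimately show ?thesis by simp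
    qed
    finally show ?thesis .
  qed
  from subsample[OF Pf n q sepc mbig] obtain s where s: "\<forall>j<m. s j < n"
    "\<forall>f\<in>P. \<forall>f'\<in>P. f \<noteq> f' \<longrightarrow> (\<exists>j<m. \<epsilon>/2 \<le> \<bar>f (z (s j)) - f' (z (s j))\<bar>)"
    by (elim exE conjE)
  define gr where "gr f = (SOME g. g \<in> prod_class C G0 \<and> margin_fun C \<gamma> g = f)" for f
  have gr: "gr f \<in> prod_class C G0 \<and> margin_fun C \<gamma> (gr f) = f" if "f \<in> P" for f
  proof -
    have "\<exists>g. g \<in> prod_class C G0 \<and> margin_fun C \<gamma> g = f" using \<open>f \<in> P\<close> PF unfolding margin_class_def by auto
    then show ?thesis unfolding gr_def by (rule someI_ex)
  qed
  define w where "w j = fst (z (s j))" for j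
  have zs: "z (s j) \<in> Zset A C" if "j < m" for j using z s(1) that by auto
  have wc: "\<forall>j<m. w j \<in> cube A" using zs unfolding w_def Zset_def by (auto simp: mem_Times_iff)
  have grb: "0 \<le> gr f k (w j) \<and> gr f k (w j) \<le> M" if "f \<in> P" "k \<in> {1..C}" "j < m" for f k j
  proof -
    have "gr f k \<in> G0" using gr[OF that(1)] that(2) unfolding prod_class_def by auto
    then show ?thesis using G0b wc that(3) by auto
  qed
  define \<eta> where "\<eta> = \<epsilon> / 6"
  have \<eta>: "0 < \<eta>" unfolding \<eta>_def using \<epsilon> by simp
  define u where "u g = (\<lambda>(j,k). nat \<lfloor>g k (w j) / \<eta>\<rfloor>)" for g :: "nat \<Rightarrow> real^'d \<Rightarrow> real"
  define Gs where "Gs = gr ` P"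
  define H where "H = u ` Gs"
  define \<Omega> where "\<Omega> = {..<m} \<times> {1..C}"
  define b where "b = nat \<lfloor>M / \<eta>\<rfloor>"
  have key: "\<exists>y\<in>\<Omega>. u (gr f') y + 2 \<le> u (gr f) y \<or> u (gr f) y + 2 \<le> u (gr f') y"
    if "f \<in> P" "f' \<in> P" "f \<noteq> f'" for f f'
  proof -
    have "\<exists>j<m. \<epsilon>/2 \<le> \<bar>f (z (s j)) - f' (z (s j))\<bar>" using s(2)[rule_format, OF that] .
    then obtain j where j: "j < m" "\<epsilon>/2 \<le> \<bar>f (z (s j)) - f' (z (s j))\<bar>" by blast
    obtain x y where xy: "z (s j) = (x, y)" by (cases "z (s j)")
    have y: "y \<in> {1..C}" using zs[OF j(1)] xy unfolding Zset_def by auto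
    have xw: "x = w j" unfolding w_def xy by simp
    have "\<epsilon>/2 \<le> \<bar>margin_fun C \<gamma> (gr f) (x, y) - margin_fun C \<gamma> (gr f') (x, y)\<bar>"
      using j(2) gr[OF that(1)] gr[OF that(2)] xy by simp
    then have "\<exists>k\<in>{1..C}. \<epsilon>/2 \<le> \<bar>gr f k x - gr f' k x\<bar>"
      using C y by (intro margin_sep) auto
    then obtain k where k: "k \<in> {1..C}" "\<epsilon>/2 \<le> \<bar>gr f k x - gr f' k x\<bar>" by blast
    have "3 * \<eta> \<le> \<bar>gr f k (w j) - gr f' k (w j)\<bar>" using k(2) xw unfolding \<eta>_def by simp
    then have "nat \<lfloor>gr f' k (w j) / \<eta>\<rfloor> + 2 \<le> nat \<lfloor>gr f k (w j) / \<eta>\<rfloor> \<or> nat \<lfloor>gr f k (w j) / \<eta>\<rfloor> + 2 \<le> nat \<lfloor>gr f' k (w j) / \<eta>\<rfloor>"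
      using grb[OF that(1) k(1) j(1)] grb[OF that(2) k(1) j(1)] \<eta> by (intro floor_sep) auto
    moreover have "(j, k) \<in> \<Omega>" unfolding \<Omega>_def using j(1) k(1) by auto
    ultimately show ?thesis unfolding u_def by (intro bexI[of _ "(j,k)"]) auto
  qed
  have injP: "inj_on (u \<circ> gr) P"
  proof (rule inj_onI, rule ccontr)
    fix f f' assume "f \<in> P" "f' \<in> P" "(u \<circ> gr) f = (u \<circ> gr) f'" "f \<noteq> f'"
    then show False using key[of f f'] by auto
  qed
  have cH: "card H = p" unfolding H_def Gs_def p_def image_image[symmetric]
    using card_image[OF injP] by (simp add: image_comp)
  have finH: "finite H" unfolding H_def Gs_def using Pf by simp
  have sepH: "sep2 \<Omega> H"
    unfolding sep2_def H_def Gs_def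
  proof (intro ballI impI)
    fix h h' assume h: "h \<in> u ` gr ` P" "h' \<in> u ` gr ` P" "h \<noteq> h'"
    then obtain f f' where ff: "f \<in> P" "f' \<in> P" "h = u (gr f)" "h' = u (gr f')" by blast
    then have "f \<noteq> f'" using h(3) by auto
    from key[OF ff(1,2) this] show "\<exists>x\<in>\<Omega>. h' x + 2 \<le> h x \<or> h x + 2 \<le> h' x"
      unfolding ff(3,4) .
  qed
  have bH: "\<forall>h\<in>H. \<forall>y\<in>\<Omega>. h y \<le> b"
  proof (intro ballI)
    fix h y assume h: "h \<in> H" and y: "y \<in> \<Omega>"
    then obtain f where f: "f \<in> P" "h = u (gr f)" unfolding H_def Gs_def by blast
    obtain j k where jk: "y = (j,k)" "j < m" "k \<in> {1..C}" using y unfolding \<Omega>_def by blast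
    have "gr f k (w j) \<le> M" using grb[OF f(1) jk(3) jk(2)] by simp
    then have "\<lfloor>gr f k (w j) / \<eta>\<rfloor> \<le> \<lfloor>M / \<eta>\<rfloor>" using \<eta> by (intro floor_mono divide_right_mono) auto
    then have "nat \<lfloor>gr f k (w j) / \<eta>\<rfloor> \<le> b" unfolding b_def by (rule nat_mono)
    then show "h y \<le> b" unfolding f(2) jk(1) u_def by simp
  qed
  have finO: "finite \<Omega>" unfolding \<Omega>_def by simp
  have cO: "card \<Omega> = m * C" unfolding \<Omega>_def by (simp add: card_cartesian_product)
  have dim: "card S \<le> C * d" if "S \<subseteq> \<Omega>" "sshat H S r" for S r
  proof (rule dim_bound[of Gs C G0 m w A \<eta> "\<epsilon>/384" d H S r])
    show "Gs \<subseteq> prod_class C G0" unfolding Gs_def using gr by auto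
    show "\<forall>j<m. w j \<in> cube A" by (rule wc)
    show "\<forall>g\<in>Gs. \<forall>k\<in>{1..C}. \<forall>j<m. 0 \<le> g k (w j)" unfolding Gs_def using grb by auto
    show "0 < \<eta>" by (rule \<eta>)
    show "\<epsilon> / 384 \<le> \<eta> / 2" unfolding \<eta>_def using \<epsilon> by simp
    show "fat_dim G0 (cube A) (\<epsilon> / 384) = enat d" by (rule fd)
    show "H = (\<lambda>g (j, k). nat \<lfloor>g k (w j) / \<eta>\<rfloor>) ` Gs" unfolding H_def u_def ..
    show "S \<subseteq> {..<m} \<times> {1..C}" using that(1) unfolding \<Omega>_def .
    show "sshat H S r" by (rule that(2))
  qed
  define N where "N = m * C"
  define Q where "Q = (N + 1) * (b + 1)"
  define D where "D = C * d"
  define k where "k = nat \<lceil>log 2 Q\<rceil>"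
  have N1: "N \<ge> 1" unfolding N_def using m1 C by simp
  have NC: "N \<ge> C" unfolding N_def using m1 by simp
  have "N + 1 \<le> Q" unfolding Q_def by simp
  then have Q4: "Q \<ge> 4" using NC C by linarith
  have D1: "D \<ge> 1" unfolding D_def using C d1 by simp
  have "card (Sh \<Omega> H) \<le> ((card \<Omega> + 1) * (b+1))^(C*d)"
    by (rule Sh_card_le[OF finO bH]) (rule dim)
  then have ShU: "card (Sh \<Omega> H) \<le> Q^D" unfolding Q_def D_def N_def cO .
  have pk: "p < Q ^ (D * k + 1)"
  proof (rule ccontr)
    assume "\<not> ?thesis"
    moreover have "N*(b+1)+1 \<le> Q" unfolding Q_def by (simp add: algebra_simps)
    then have "(N*(b+1)+1)^(D * k + 1) \<le> Q^(D * k + 1)" by (rule power_mono) simp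
    ultimately have "(N*(b+1)+1)^(D * k + 1) \<le> card H" using cH by linarith
    then have A2: "2^(D * k + 1) \<le> card (Sh \<Omega> H)"
      by (intro alon_count[OF N1 finO _ bH sepH finH]) (simp add: cO N_def)
    have "Q \<le> 2^k"
    proof -
      have "real Q = 2 powr (log 2 Q)" using Q4 by simp
      also have "\<dots> \<le> 2 powr (real k)" unfolding k_def by (intro powr_mono) (auto simp: real_nat_ceiling_ge)
      also have "\<dots> = 2^k" by (simp add: powr_realpow)
      finally show ?thesis by (simp flip: of_nat_le_iff)
    qed
    then have "Q^D \<le> (2^k)^D" by (rule power_mono) simp
    moreover have "(2::nat)^(D * k + 1) = 2 * (2^k)^D" by (simp add: power_mult[symmetric] mult.commute)
    ultimately have "2 * Q^D \<le> 2^(D * k + 1)" by simp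
    moreover have "Q^D \<ge> 1" using Q4 by simp
    ultimately show False using ShU A2 by linarith
  qed
  have lb: "ln (real p) \<le> 4 * real D * (ln (real Q))^2"
    using log_bound[OF Q4 D1 _ pk[unfolded k_def]] p0 by simp
  have Qb: "real Q \<le> 42 * C * M * X / \<epsilon>^3"
  proof -
    have b1: "real b + 1 \<le> 7 * M / \<epsilon>"
    proof -
      have "0 \<le> \<lfloor>M / \<eta>\<rfloor>" using M \<eta> by simp
      then have "real b = real_of_int \<lfloor>M / \<eta>\<rfloor>" unfolding b_def by simp
      then have "real b \<le> M / \<eta>" by simp
      also have "\<dots> = 6 * M / \<epsilon>" unfolding \<eta>_def by simp
      finally have "real b + 1 \<le> 6 * M / \<epsilon> + 1" by simp
      also have "\<dots> \<le> 7 * M / \<epsilon>" using \<epsilon> \<epsilon>1 M by (simp add: field_simps)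
      finally show ?thesis .
    qed
    have N1': "real N + 1 \<le> 6 * (C * X / \<epsilon>^2)"
    proof -
      have "real N = real m * C" unfolding N_def by simp
      also have "\<dots> \<le> (4 * X / \<epsilon>^2 + 1) * C" using m_hi by (intro mult_right_mono) auto
      also have "\<dots> = 4 * (C * X / \<epsilon>^2) + C" by (simp add: algebra_simps)
      finally have a1: "real N \<le> 4 * (C * X / \<epsilon>^2) + C" .
      have "\<epsilon>^2 \<le> X" using X1 e21 by linarith
      then have "1 \<le> X / \<epsilon>^2" using \<epsilon> by (simp add: le_divide_eq)
      then have "real C * 1 \<le> C * (X / \<epsilon>^2)" by (intro mult_left_mono) auto
      then have a2: "real C \<le> C * X / \<epsilon>^2" by simp
      have a3: "(1::real) \<le> C" using C by simp
      have gen: "\<And>Y N c :: real. N \<le> 4 * Y + c \<Longrightarrow> c \<le> Y \<Longrightarrow> 1 \<le> c \<Longrightarrow> N + 1 \<le> 6 * Y" by linarith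
      show ?thesis by (rule gen[OF a1 a2 a3])
    qed
    have "real Q = (real N + 1) * (real b + 1)" unfolding Q_def by (simp add: algebra_simps)
    also have "\<dots> \<le> (6 * (C * X / \<epsilon>^2)) * (7 * M / \<epsilon>)"
      using N1' b1 by (intro mult_mono) auto
    also have "\<dots> = 42 * C * M * X / \<epsilon>^3" using \<epsilon> by (simp add: field_simps power3_eq_cube power2_eq_square)
    finally show ?thesis .
  qed
  have "(ln (real Q))^2 \<le> (ln (42 * C * M * X / \<epsilon>^3))^2"
  proof (rule power_mono)
    show "ln (real Q) \<le> ln (42 * C * M * X / \<epsilon>^3)" using Qb Q4 by (subst ln_le_cancel_iff) auto
    show "0 \<le> ln (real Q)" using Q4 by simp
  qed
  then have "4 * real D * (ln (real Q))^2 \<le> 4 * real D * (ln (42 * C * M * X / \<epsilon>^3))^2"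
    by (intro mult_left_mono) auto
  with lb show ?thesis unfolding X_def p_def D_def by simp
qed

lemma sq_le_4exp: "0 \<le> t \<Longrightarrow> t^2 \<le> 4 * exp t" for t :: real
proof -
  assume t: "0 \<le> t"
  have "1 + t/2 \<le> exp (t/2)" by (rule exp_ge_add_one_self)
  then have "(1 + t/2)^2 \<le> exp (t/2)^2" using t by (intro power_mono) auto
  also have "exp (t/2)^2 = exp t" by (simp add: power2_eq_square exp_add[symmetric])
  finally have "(1 + t/2)^2 \<le> exp t" .
  moreover have "(t/2)^2 \<le> (1 + t/2)^2" using t by (intro power_mono) auto
  ultimately have "(t/2)^2 \<le> exp t" by linarith
  then show ?thesis by (simp add: power_divide)
qed

lemma final_arith:
  fixes c M dd e g :: real
  assumes c: "c \<ge> 3" and M: "M \<ge> 1" and dd: "dd \<ge> 1" and e: "0 < e" "e \<le> g" and g: "g \<le> 1"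
  defines "Y \<equiv> 256 * c * M^2 / e^2 * dd"
  defines "R \<equiv> 640 * c * dd * (ln Y)^2 * ln (7 * g / e)"
  shows "1 \<le> R" "3 \<le> exp R"
    "\<And>x. R < x \<Longrightarrow> x \<le> 2 * R \<Longrightarrow> 4 * c * dd * (ln (42 * c * M * x / e^3))^2 < x"
proof -
  have e1: "e \<le> 1" using e g by linarith
  have e2: "e^2 \<le> 1" "0 < e^2" using e e1 by (auto intro: power_le_one)
  have Mq: "1 \<le> M^2" using M by (simp add: one_le_power)
  have Y256: "256 \<le> Y"
  proof -
    have "1 \<le> M^2 / e^2" using Mq e2 by (simp add: le_divide_eq)
    then have "1 * 1 * 1 \<le> c * (M^2 / e^2) * dd" using c dd by (intro mult_mono) auto
    moreover have "Y = 256 * (c * (M^2 / e^2) * dd)" unfolding Y_def by simp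
    ultimately show ?thesis by linarith
  qed
  have Ypos: "0 < Y" using Y256 by linarith
  define L where "L = ln Y"
  have L1: "1 \<le> L"
  proof -
    have "exp 1 \<le> Y" using exp_le Y256 by linarith
    then show ?thesis unfolding L_def using Ypos by (metis ln_exp ln_le_cancel_iff exp_gt_zero)
  qed
  define lam where "lam = ln (7 * g / e)"
  have lam1: "1 \<le> lam"
  proof -
    have "7 \<le> 7 * g / e" using e by (simp add: le_divide_eq)
    moreover have "exp 1 \<le> (7::real)" using exp_le by linarith
    ultimately have "exp 1 \<le> 7 * g / e" by linarith
    then show ?thesis unfolding lam_def using e by (metis ln_exp ln_le_cancel_iff exp_gt_zero order_less_le_trans)
  qed
  have Rdef: "R = 640 * c * dd * L^2 * lam" unfolding R_def L_def lam_def ..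
  have cdL: "1 \<le> c * dd * L^2"
  proof -
    have "1 \<le> L^2" using L1 by (simp add: one_le_power)
    then have "1 * 1 * 1 \<le> c * dd * L^2" using c dd by (intro mult_mono) auto
    then show ?thesis by simp
  qed
  have RL: "640 * (c * dd * L^2) \<le> R"
  proof -
    have "640 * (c * dd * L^2) * 1 \<le> 640 * (c * dd * L^2) * lam" using lam1 cdL by (intro mult_left_mono) auto
    then show ?thesis unfolding Rdef by (simp add: mult.assoc)
  qed
  show R1: "1 \<le> R" using RL cdL by linarith
  show "3 \<le> exp R"
  proof -
    have "1 + R \<le> exp R" by (rule exp_ge_add_one_self)
    moreover have "2 \<le> R" using RL cdL by linarith
    ultimately show ?thesis by linarith
  qed
  have lamb: "lam \<le> 7 / e"
  proof -
    have "lam \<le> 7 * g / e" unfolding lam_def using e by (intro ln_bound) auto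
    also have "\<dots> \<le> 7 / e" using e g by (intro divide_right_mono) auto
    finally show ?thesis .
  qed
  have L2: "L^2 \<le> 4 * Y"
  proof -
    have "L^2 \<le> 4 * exp L" using L1 by (intro sq_le_4exp) auto
    also have "exp L = Y" unfolding L_def using Ypos by simp
    finally show ?thesis .
  qed
  have RY: "R \<le> 640 * c * dd * (4 * Y) * (7 / e)"
    unfolding Rdef using L2 lamb lam1 c dd Ypos by (intro mult_mono) auto
  have key: "84 * c * M * R / e^3 \<le> Y^6"
  proof -
    have "84 * c * M * R / e^3 \<le> 84 * c * M * (640 * c * dd * (4 * Y) * (7 / e)) / e^3"
      using RY c M e by (intro divide_right_mono mult_left_mono) auto
    also have "\<dots> = 1505280 * (c^2 * M * dd / e^4) * Y" using e by (simp add: field_simps power2_eq_square power3_eq_cube power4_eq_xxxx)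
    also have "\<dots> \<le> 1505280 * ((Y / 256)^2) * Y"
    proof -
      have "c^2 * M * dd / e^4 \<le> (c * M^2 * dd / e^2)^2"
      proof -
        have "M \<le> M^4" using M by (simp add: self_le_power)
        moreover have "dd \<le> dd^2" using dd by (simp add: self_le_power)
        ultimately have "c^2 * M * dd \<le> c^2 * M^4 * dd^2" using c M dd
          by (intro mult_mono) auto
        then have "c^2 * M * dd / e^4 \<le> c^2 * M^4 * dd^2 / e^4" using e by (intro divide_right_mono) auto
        also have "\<dots> = (c * M^2 * dd / e^2)^2" by (simp add: power_divide power2_eq_square power4_eq_xxxx mult_ac)
        finally show ?thesis .
      qed
      also have "c * M^2 * dd / e^2 = Y / 256" unfolding Y_def by (simp add: field_simps)
      finally show ?thesis using Ypos by (intro mult_right_mono mult_left_mono) auto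
    qed
    also have "\<dots> \<le> Y^6"
    proof -
      have "1505280 * ((Y / 256)^2) * Y = (1505280 / 65536) * Y^3" by (simp add: power2_eq_square power3_eq_cube field_simps)
      also have "\<dots> \<le> 23 * Y^3" using Ypos by (intro mult_right_mono) auto
      also have "\<dots> \<le> Y^3 * Y^3"
      proof -
        have "(23::real) \<le> 256^3" by simp
        also have "\<dots> \<le> Y^3" using Y256 by (intro power_mono) auto
        finally show ?thesis using Ypos by (intro mult_right_mono) auto
      qed
      also have "\<dots> = Y^6" by (simp flip: power_add)
      finally show ?thesis .
    qed
    finally show ?thesis .
  qed
  fix x assume x: "R < x" "x \<le> 2 * R"
  have xpos: "0 < x" using x R1 by linarith
  have arg1: "1 \<le> 42 * c * M * x / e^3"
  proof -
    have "1 * 1 * 1 \<le> c * M * x" using c M x R1 by (intro mult_mono) auto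
    moreover have "e^3 \<le> 1" using e e1 by (intro power_le_one) auto
    ultimately have "e^3 \<le> 42 * c * M * x" by linarith
    then show ?thesis using e by (simp add: le_divide_eq)
  qed
  have "42 * c * M * x / e^3 \<le> 84 * c * M * R / e^3"
    using x c M e by (intro divide_right_mono) auto
  then have "42 * c * M * x / e^3 \<le> Y^6" using key by linarith
  then have "ln (42 * c * M * x / e^3) \<le> ln (Y^6)" using arg1 by (subst ln_le_cancel_iff) auto
  also have "ln (Y^6) = 6 * L" unfolding L_def using Ypos by (simp add: ln_realpow)
  finally have l6: "ln (42 * c * M * x / e^3) \<le> 6 * L" .
  have "(ln (42 * c * M * x / e^3))^2 \<le> (6 * L)^2" using l6 arg1 by (intro power_mono) auto
  then have "4 * c * dd * (ln (42 * c * M * x / e^3))^2 \<le> 4 * c * dd * (6 * L)^2" using c dd by (intro mult_left_mono) auto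
  also have "\<dots> = 144 * (c * dd * L^2)" by (simp add: power2_eq_square)
  also have "\<dots> < R" using RL cdL by linarith
  finally show "4 * c * dd * (ln (42 * c * M * x / e^3))^2 < x" using x by linarith
qed

theorem corollary2:
  fixes C :: nat and A M \<gamma> \<epsilon> :: real and n :: nat
    and G0 :: "((real^'d) \<Rightarrow> real) set"
    and z :: "nat \<Rightarrow> (real^'d) \<times> nat"
  assumes "C > 2" and "A \<ge> 1" and "M \<ge> 1"
    and "\<forall>f\<in>G0. \<forall>x\<in>cube A. 0 \<le> f x \<and> f x \<le> M"
    and "0 < \<gamma>" and "\<gamma> \<le> 1"
    and "0 < \<epsilon>" and "\<epsilon> \<le> \<gamma>"
    and "fat_dim G0 (cube A) (\<epsilon> / 384) \<ge> 1"
    and "fat_dim G0 (cube A) (\<epsilon> / 384) \<noteq> \<infinity>"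
    and "n > 0" and "\<forall>i<n. z i \<in> Zset A C"
  shows "covering_number \<epsilon> (margin_class C \<gamma> (prod_class C G0)) (d2 n z) \<noteq> \<infinity> \<and>
    ln (real (the_enat (covering_number \<epsilon> (margin_class C \<gamma> (prod_class C G0)) (d2 n z))))
    \<le> 640 * real C * real (the_enat (fat_dim G0 (cube A) (\<epsilon> / 384)))
       * (ln (256 * real C * M^2 / \<epsilon>^2 * real (the_enat (fat_dim G0 (cube A) (\<epsilon> / 384)))))^2
       * ln (7 * \<gamma> / \<epsilon>)"
proof -
  note as = assms
  define d where "d = the_enat (fat_dim G0 (cube A) (\<epsilon> / 384))"
  have fd: "fat_dim G0 (cube A) (\<epsilon> / 384) = enat d" unfolding d_def using as(10) by auto
  have d1: "d \<ge> 1" using as(9) fd by (simp add: one_enat_def)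
  define F where "F = margin_class C \<gamma> (prod_class C G0)"
  define R where "R = 640 * real C * real d * (ln (256 * real C * M^2 / \<epsilon>^2 * real d))^2 * ln (7 * \<gamma> / \<epsilon>)"
  have C3: "real C \<ge> 3" using as(1) by simp
  have d1r: "real d \<ge> 1" using d1 by simp
  note fa = final_arith[OF C3 as(3) d1r as(7) as(8) as(6)]
  have R1: "1 \<le> R" using fa(1) unfolding R_def by (simp add: mult.assoc)
  have R3: "3 \<le> exp R" using fa(2) unfolding R_def by (simp add: mult.assoc)
  have fa3: "\<And>x. R < x \<Longrightarrow> x \<le> 2 * R \<Longrightarrow> 4 * real C * real d * (ln (42 * real C * M * x / \<epsilon>^3))^2 < x"
    using fa(3) unfolding R_def by (simp add: mult.assoc)
  define K where "K = nat \<lfloor>exp R\<rfloor>"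
  have Kr0: "real K = real_of_int \<lfloor>exp R\<rfloor>" unfolding K_def by simp
  have Kr: "real K \<le> exp R" "exp R < real K + 1" unfolding Kr0 by linarith+
  have K3: "K \<ge> 3" using R3 Kr by linarith
  have bnd: "card P \<le> K" if P: "finite P" "P \<subseteq> F" "\<forall>f\<in>P. \<forall>g\<in>P. f \<noteq> g \<longrightarrow> \<epsilon> \<le> d2 n z f g" for P
  proof (rule ccontr)
    assume "\<not> card P \<le> K"
    then have "K + 1 \<le> card P" by simp
    then obtain P' where P': "P' \<subseteq> P" "card P' = K + 1" "finite P'" by (rule obtain_subset_with_card_n)
    have sepP': "\<forall>f\<in>P'. \<forall>f'\<in>P'. f \<noteq> f' \<longrightarrow> \<epsilon> \<le> d2 n z f f'" using P(3) P'(1) by blast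
    have c3: "card P' \<ge> 3" using P'(2) K3 by simp
    have cb: "ln (card P') \<le> 4 * real (C * d) * (ln (42 * C * M * ln (card P') / \<epsilon>^3))^2"
      by (rule core[OF as(1) as(3) as(4) as(5) as(6) as(7) as(8) fd d1 as(11) as(12) P'(3) _ sepP' c3])
         (use P(2) P'(1) F_def in auto)
    define x where "x = ln (real (card P'))"
    have xR: "R < x"
    proof -
      have "exp R < real (card P')" using Kr P'(2) by simp
      then have "ln (exp R) < ln (real (card P'))" using c3 by (subst ln_less_cancel_iff) auto
      then show ?thesis unfolding x_def by simp
    qed
    have x2R: "x \<le> 2 * R"
    proof -
      have "real (card P') \<le> exp R + 1" using Kr P'(2) by simp
      also have "\<dots> \<le> exp R * exp R"
      proof -
        have "3 * exp R \<le> exp R * exp R" using R3 by (intro mult_right_mono) auto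
        then show ?thesis using R3 by linarith
      qed
      also have "\<dots> = exp (2 * R)" by (simp add: exp_add[symmetric])
      finally have "ln (real (card P')) \<le> ln (exp (2 * R))" using c3 by (subst ln_le_cancel_iff) auto
      then show ?thesis unfolding x_def by simp
    qed
    have "4 * real C * real d * (ln (42 * real C * M * x / \<epsilon>^3))^2 < x" by (rule fa3[OF xR x2R])
    moreover have "x \<le> 4 * real C * real d * (ln (42 * real C * M * x / \<epsilon>^3))^2"
      using cb unfolding x_def by simp
    ultimately show False by linarith
  qed
  have r0: "\<forall>f\<in>F. d2 n z f f < \<epsilon>" unfolding d2_def using as(7) by simp
  have sym: "\<forall>f g. d2 n z f g = d2 n z g f" unfolding d2_def by (simp add: abs_minus_commute)
  have pc: "covering_number \<epsilon> F (d2 n z) \<noteq> \<infinity> \<and> the_enat (covering_number \<epsilon> F (d2 n z)) \<le> K"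
    by (rule pack_cover[OF r0 sym bnd])
  have "ln (real (the_enat (covering_number \<epsilon> F (d2 n z)))) \<le> R"
  proof (cases "the_enat (covering_number \<epsilon> F (d2 n z)) = 0")
    case True then show ?thesis using R1 by simp
  next
    case False
    then have "ln (real (the_enat (covering_number \<epsilon> F (d2 n z)))) \<le> ln (exp R)"
      using pc Kr by (subst ln_le_cancel_iff) auto
    then show ?thesis by simp
  qed
  then show ?thesis using pc unfolding F_def R_def d_def by simp
qed

end
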